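(* A distributional factorization satisfying the DIGM principle does not guarantee the RIGM principle. Precisely: there exist a number of agents $N$, finite action sets, a distributional factorization $\Phi$, per-agent return distributions $[Z_i(\tau_i,u_i)]_{i=1}^N$ and a risk metric $\psi_\alpha$ (which can be taken to be a Value-at-Risk metric $\mathrm{VaR}_\alpha$) such that $[Z_i]_{i=1}^N$ satisfy DIGM for $Z_{jt}(\boldsymbol\tau,\boldsymbol u)=\Phi(Z_1(\tau_1,u_1),\dots,Z_N(\tau_N,u_N))$, but $[Z_i]_{i=1}^N$ do not satisfy RIGM for $Z_{jt}$ with risk metric $\psi_\alpha$.
   Context: There are $N$ agents; agent $i$ has observation history $\tau_i$ and a finite action set $U_i$; $\boldsymbol\tau=(\tau_1,\dots,\tau_N)$, $\boldsymbol u=(u_1,\dots,u_N)$. Return distributions are real random variables. For a real random variable $Z$ with CDF $F_Z$, its quantile function is $\theta_Z(\omega)=\inf\{z\in\mathbb{R}:\omega\le F_Z(z)\}$, $\omega\in(0,1]$, and $\mathrm{VaR}_\alpha(Z)=\theta_Z(\alpha)$. RIGM: given a risk metric $\psi_\alpha$, per-agent return distributions $[Z_i(\tau_i,u_i)]$ satisfy RIGM for a joint return distribution $Z_{jt}(\boldsymbol\tau,\boldsymbol u)$ with $\psi_\alpha$ under $\boldsymbol\tau$ if $\arg\max_{\boldsymbol u}\psi_\alpha[Z_{jt}(\boldsymbol\tau,\boldsymbol u)]=(\arg\max_{u_1}\psi_\alpha[Z_1(\tau_1,u_1)],\dots,\arg\max_{u_N}\psi_\alpha[Z_N(\tau_N,u_N)])$.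 DIGM is RIGM with $\psi_\alpha$ replaced by the expectation $\mathbb{E}$. Argmax sets are assumed to be singletons (ties broken by smallest index). *)

theory Defs
  imports "HOL-Probability.Probability"
begin

definition is_return_dist :: "real measure \<Rightarrow> bool" where
  "is_return_dist M \<longleftrightarrow> prob_space M \<and> sets M = sets borel \<and> integrable M (\<lambda>x. x)"

definition expect :: "real measure \<Rightarrow> real" where
  "expect M = integral\<^sup>L M (\<lambda>x. x)"

definition cdf_of :: "real measure \<Rightarrow> real \<Rightarrow> real" where
  "cdf_of M z = measure M {..z}"

definition quantile :: "real measure \<Rightarrow> real \<Rightarrow> real" where
  "quantile M \<omega> = Inf {z. \<omega> \<le> cdf_of M z}"

definition VaR :: "real \<Rightarrow> real measure \<Rightarrow> real" where
  "VaR \<alpha> M = quantile M \<alpha>"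

text \<open>Agents are 0..<N; joint actions/histories are lists of length N.\<close>
definition joint_actions :: "nat \<Rightarrow> (nat \<Rightarrow> nat set) \<Rightarrow> nat list set" where
  "joint_actions N U = {us. length us = N \<and> (\<forall>i<N. us ! i \<in> U i)}"

definition argmax_set :: "('a \<Rightarrow> real) \<Rightarrow> 'a set \<Rightarrow> 'a set" where
  "argmax_set f A = {a \<in> A. \<forall>b \<in> A. f b \<le> f a}"

definition joint_dist ::
  "(real measure list \<Rightarrow> real measure) \<Rightarrow> nat \<Rightarrow> (nat \<Rightarrow> nat \<Rightarrow> nat \<Rightarrow> real measure)
     \<Rightarrow> nat list \<Rightarrow> nat list \<Rightarrow> real measure" where
  "joint_dist \<Phi> N Z \<tau>s us = \<Phi> (map (\<lambda>i. Z i (\<tau>s ! i) (us ! i)) [0..<N])"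

text \<open>The IGM-type condition for a metric psi under joint history taus
  (argmax sets are singletons by the standing assumption, so equality of argmax sets
   is equality of the argmax actions).\<close>
definition IGM_wrt ::
  "(real measure \<Rightarrow> real) \<Rightarrow> nat \<Rightarrow> (nat \<Rightarrow> nat set) \<Rightarrow> (nat \<Rightarrow> nat \<Rightarrow> nat \<Rightarrow> real measure)
     \<Rightarrow> (nat list \<Rightarrow> real measure) \<Rightarrow> nat list \<Rightarrow> bool" where
  "IGM_wrt \<psi> N U Z Zjt \<tau>s \<longleftrightarrow>
     argmax_set (\<lambda>us. \<psi> (Zjt us)) (joint_actions N U) =
     {us \<in> joint_actions N U. \<forall>i<N. us ! i \<in> argmax_set (\<lambda>a. \<psi> (Z i (\<tau>s ! i) a)) (U i)}"

definition RIGM where "RIGM \<alpha> \<psi> = IGM_wrt (\<psi> \<alpha>)"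
definition DIGM where "DIGM = IGM_wrt expect"

definition argmax_unique ::
  "(real measure \<Rightarrow> real) \<Rightarrow> nat \<Rightarrow> (nat \<Rightarrow> nat set) \<Rightarrow> (nat \<Rightarrow> nat \<Rightarrow> nat \<Rightarrow> real measure)
     \<Rightarrow> (nat list \<Rightarrow> real measure) \<Rightarrow> nat list \<Rightarrow> bool" where
  "argmax_unique \<psi> N U Z Zjt \<tau>s \<longleftrightarrow>
     (\<exists>!us. us \<in> argmax_set (\<lambda>us. \<psi> (Zjt us)) (joint_actions N U)) \<and>
     (\<forall>i<N. \<exists>!a. a \<in> argmax_set (\<lambda>a. \<psi> (Z i (\<tau>s ! i) a)) (U i))"

end

theory Submission imports Defs begin
definition gg :: "bool \<Rightarrow> real" where "gg b = (if b then 3 else -1)"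
definition DD :: "real measure" where "DD = distr (measure_pmf (bernoulli_pmf (1/2))) borel gg"

lemma g_meas: "gg \<in> measurable (measure_pmf (bernoulli_pmf (1/2))) borel" by simp

lemma D1: "prob_space DD \<and> sets DD = sets borel \<and> integrable DD (\<lambda>x. x)"
  unfolding DD_def
  apply (intro conjI)
    apply (rule measure_pmf.prob_space_distr, simp)
   apply simp
  apply (subst integrable_distr_eq, simp, simp)
  apply (rule integrable_measure_pmf_finite, simp)
  done

lemma D2: "integral\<^sup>L DD (\<lambda>x. x) = 1"
  unfolding DD_def
  apply (subst integral_distr, simp, simp)
  apply (subst integral_measure_pmf_real[where A=UNIV], simp, simp)
  apply (simp add: UNIV_bool gg_def)
  done

lemma D3: "measure DD {..z} = (if z < -1 then 0 else if z < 3 then 1/2 else 1)"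
proof -
  have "measure DD {..z} = measure_pmf.prob (bernoulli_pmf (1/2)) (gg -` {..z})"
    unfolding DD_def by (subst measure_distr, simp_all)
  also have "\<dots> = (if z < -1 then 0 else if z < 3 then 1/2 else 1)"
  proof -
    have "gg -` {..z} = (if z < -1 then {} else if z < 3 then {False} else UNIV)"
      by (auto simp: gg_def split: if_splits)
    then show ?thesis by (simp add: measure_pmf_single)
  qed
  finally show ?thesis .
qed

lemma D4: "Inf {z::real. 1/2 \<le> measure DD {..z}} = -1"
proof -
  have "{z::real. 1/2 \<le> measure DD {..z}} = {-1..}" by (auto simp: D3)
  then show ?thesis by simp
qed

lemma R1: "measure (return borel (c::real)) {..z} = (if c \<le> z then 1 else 0)"
  by (simp add: measure_return)
lemma R2: "0 < a \<Longrightarrow> a \<le> 1 \<Longrightarrow> Inf {z::real. a \<le> measure (return borel c) {..z}} = c"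
proof -
  assume "0 < a" "a \<le> 1"
  then have "{z::real. a \<le> measure (return borel c) {..z}} = {c..}" by (auto simp: R1)
  then show ?thesis by simp
qed
lemma R3: "prob_space (return borel (c::real)) \<and> sets (return borel c) = sets borel \<and> integrable (return borel c) (\<lambda>x. x)"
proof -
  have p: "prob_space (return borel (c::real))" by (auto intro!: prob_space_return)
  have "integrable (return borel c) (\<lambda>x. x)"
    apply (rule finite_measure.integrable_const_bound[OF prob_space.finite_measure[OF p], where B="\<bar>c\<bar>"])
     apply (subst AE_return, simp_all)
    done
  with p show ?thesis by simp
qed
lemma R4: "integral\<^sup>L (return borel (c::real)) (\<lambda>x. x) = c"
  by (simp add: integral_return)

definition ZZ :: "nat \<Rightarrow> nat \<Rightarrow> nat \<Rightarrow> real measure" where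
  "ZZ i t a = (if a = 0 then return borel 1 else return borel 0)"
definition PP :: "real measure list \<Rightarrow> real measure" where
  "PP ms = (if expect (hd ms) = 1 then DD else return borel 0)"
abbreviation UU :: "nat \<Rightarrow> nat set" where "UU \<equiv> \<lambda>i. {0,1}"

lemma JA: "joint_actions 1 UU = {[0],[1]}"
proof -
  have "us \<in> joint_actions 1 UU \<longleftrightarrow> us = [0] \<or> us = [1]" for us
  proof
    assume "us \<in> joint_actions 1 UU"
    then have "length us = 1" "us ! 0 \<in> {0,1}" by (auto simp: joint_actions_def)
    then show "us = [0] \<or> us = [1]"
      by (cases us) auto
  qed (auto simp: joint_actions_def)
  then show ?thesis by auto
qed

lemma ZE: "expect (ZZ i t a) = (if a = 0 then 1 else 0)"
  by (simp add: ZZ_def expect_def R4)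
lemma ZV: "VaR (1/2) (ZZ i t a) = (if a = 0 then 1 else 0)"
  unfolding ZZ_def VaR_def quantile_def cdf_of_def using R2[of "1/2"] by simp
lemma JD0: "joint_dist PP 1 ZZ ts [0] = DD"
  by (simp add: joint_dist_def PP_def ZE)
lemma JD1: "joint_dist PP 1 ZZ ts [1] = return borel 0"
  by (simp add: joint_dist_def PP_def ZE)
lemma JD0': "joint_dist PP (Suc 0) ZZ ts [0] = DD" using JD0 by simp
lemma JD1': "joint_dist PP (Suc 0) ZZ ts [Suc 0] = return borel 0" using JD1 by simp
lemma JA': "joint_actions (Suc 0) (\<lambda>i. {0, Suc 0}) = {[0],[Suc 0]}" using JA by simp
lemma DE: "expect DD = 1" by (simp add: expect_def D2)
lemma DV: "VaR (1/2) DD = -1" unfolding VaR_def quantile_def cdf_of_def by (rule D4)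
lemma RE: "expect (return borel 0) = 0" by (simp add: expect_def R4)
lemma RV: "VaR (1/2) (return borel 0) = 0" unfolding VaR_def quantile_def cdf_of_def by (rule R2) simp_all

lemma AM_E_ag: "argmax_set (\<lambda>a. expect (ZZ i t a)) {0,1} = {0}"
  by (auto simp: argmax_set_def ZE)
lemma AM_V_ag: "argmax_set (\<lambda>a. VaR (1/2) (ZZ i t a)) {0,1} = {0}"
  by (auto simp: argmax_set_def ZV)
lemma AM_E_j: "argmax_set (\<lambda>us. expect (joint_dist PP 1 ZZ ts us)) (joint_actions 1 UU) = {[0]}"
  unfolding JA argmax_set_def JD0 JD1 using DE RE JD0' JD1' by auto
lemma AM_V_j: "argmax_set (\<lambda>us. VaR (1/2) (joint_dist PP 1 ZZ ts us)) (joint_actions 1 UU) = {[1]}"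
  unfolding JA argmax_set_def JD0 JD1 using DV RV JD0' JD1' by auto

theorem theorem2:
  shows "\<exists>(N::nat) (U::nat \<Rightarrow> nat set) (\<Phi>::real measure list \<Rightarrow> real measure)
            (Z::nat \<Rightarrow> nat \<Rightarrow> nat \<Rightarrow> real measure) (\<alpha>::real).
     N \<ge> 1 \<and> (\<forall>i<N. finite (U i) \<and> U i \<noteq> {}) \<and> 0 < \<alpha> \<and> \<alpha> \<le> 1 \<and>
     (\<forall>i<N. \<forall>t a. a \<in> U i \<longrightarrow> is_return_dist (Z i t a)) \<and>
     (\<forall>\<tau>s us. length \<tau>s = N \<longrightarrow> us \<in> joint_actions N U \<longrightarrow>
         is_return_dist (joint_dist \<Phi> N Z \<tau>s us)) \<and>
     (\<forall>\<tau>s. length \<tau>s = N \<longrightarrow>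
         argmax_unique expect N U Z (joint_dist \<Phi> N Z \<tau>s) \<tau>s \<and>
         argmax_unique (VaR \<alpha>) N U Z (joint_dist \<Phi> N Z \<tau>s) \<tau>s) \<and>
     (\<forall>\<tau>s. length \<tau>s = N \<longrightarrow> DIGM N U Z (joint_dist \<Phi> N Z \<tau>s) \<tau>s) \<and>
     (\<exists>\<tau>s. length \<tau>s = N \<and> \<not> RIGM \<alpha> VaR N U Z (joint_dist \<Phi> N Z \<tau>s) \<tau>s)"
proof (rule exI[of _ "1::nat"], rule exI[of _ UU], rule exI[of _ PP], rule exI[of _ ZZ], rule exI[of _ "1/2::real"], intro conjI allI impI)
  show "\<exists>\<tau>s. length \<tau>s = 1 \<and> \<not> RIGM (1/2) VaR 1 UU ZZ (joint_dist PP 1 ZZ \<tau>s) \<tau>s"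
  proof (rule exI[of _ "[0]"], intro conjI notI)
    assume "RIGM (1/2) VaR 1 UU ZZ (joint_dist PP 1 ZZ [0]) [0]"
    then have "{[1::nat]} = {us \<in> joint_actions 1 UU. \<forall>i<1. us ! i \<in> {0}}"
      unfolding RIGM_def IGM_wrt_def AM_V_j AM_V_ag .
    also have "\<dots> = {[0]}" unfolding JA by auto
    finally show False by simp
  qed simp
next
  fix ts :: "nat list" assume "length ts = 1"
  show "DIGM 1 UU ZZ (joint_dist PP 1 ZZ ts) ts"
  proof -
    have "{us \<in> joint_actions 1 UU. \<forall>i<1. us ! i \<in> {0}} = {[0]}" unfolding JA by auto
    then show ?thesis unfolding DIGM_def IGM_wrt_def AM_E_j AM_E_ag by simp
  qed
  show "argmax_unique expect 1 UU ZZ (joint_dist PP 1 ZZ ts) ts"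
    unfolding argmax_unique_def AM_E_j AM_E_ag by simp
  show "argmax_unique (VaR (1/2)) 1 UU ZZ (joint_dist PP 1 ZZ ts) ts"
    unfolding argmax_unique_def AM_V_j AM_V_ag by simp
next
  fix ts us :: "nat list" assume "length ts = 1" "us \<in> joint_actions 1 UU"
  then show "is_return_dist (joint_dist PP 1 ZZ ts us)"
    by (auto simp: JA' JD0 JD1 JD0' JD1' is_return_dist_def D1 R3)
next
  fix i t a assume "i < (1::nat)" "a \<in> UU i"
  show "is_return_dist (ZZ i t a)" by (simp add: ZZ_def is_return_dist_def R3)
qed auto

end
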